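(* Let $m\ge 1$, $N>0$, $P_1,\dots,P_m>0$ and $g_1,\dots,g_m\ge 0$. Let $\mathcal{P}$ be the set of joint distributions $p_{\mathbf{X}}$ of complex random vectors $\mathbf{X}=(X_1,\dots,X_m)\in\mathbb{C}^m$ with $\mathbb{E}|X_i|^2\le P_i$ for all $i$. For $p_{\mathbf{X}}\in\mathcal{P}$ and $\boldsymbol\theta=(\theta_1,\dots,\theta_m)\in[0,2\pi)^m$ define $$B_{\boldsymbol\theta}(p_{\mathbf{X}})=I\Big(\mathbf{X};\ \sum_{i=1}^m g_i e^{j\theta_i}X_i+Z\Big),$$ where $Z\sim\mathcal{CN}(0,N)$ is independent of $\mathbf{X}$. Let $p^*_{\mathbf{X}}\in\mathcal{P}$ be the distribution under which $X_1,\dots,X_m$ are independent, zero-mean, circularly symmetric complex Gaussian with $\mathbb{E}|X_i|^2=P_i$. Then $$\sup_{p_{\mathbf{X}}\in\mathcal{P}}\ \inf_{\boldsymbol\theta\in[0,2\pi)^m} B_{\boldsymbol\theta}(p_{\mathbf{X}})=\log_2\Big(1+\sum_{i=1}^m g_i^2P_i/N\Big)=B_{\boldsymbol\theta}(p^*_{\mathbf{X}})\quad\text{for every }\boldsymbol\theta,$$ so the max-min is attained by $p^*_{\mathbf{X}}$.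
   Context: $\mathcal{CN}(0,N)$ denotes a circularly symmetric complex Gaussian random variable with variance $\mathbb{E}|Z|^2=N$. Mutual information is measured in bits. $j=\sqrt{-1}$. *)

theory Defs
  imports "HOL-Probability.Probability"
begin

definition cgauss_density :: "real \<Rightarrow> complex \<Rightarrow> real" where
  "cgauss_density N z = exp (- (cmod z)\<^sup>2 / N) / (pi * N)"

definition cgauss :: "real \<Rightarrow> complex measure" where
  "cgauss N = density lborel (\<lambda>z. ennreal (cgauss_density N z))"

definition admissible :: "('m::finite \<Rightarrow> real) \<Rightarrow> (complex ^ 'm) measure set" where
  "admissible Pw = {M. prob_space M \<and> sets M = sets (borel :: (complex ^ 'm) measure) \<and>
      (\<forall>i. (\<integral>\<^sup>+ x. ennreal ((cmod (x $ i))\<^sup>2) \<partial>M) \<le> ennreal (Pw i))}"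

definition Btheta :: "real \<Rightarrow> ('m::finite \<Rightarrow> real) \<Rightarrow> ('m \<Rightarrow> real) \<Rightarrow> (complex ^ 'm) measure \<Rightarrow> real" where
  "Btheta N g \<theta> M = prob_space.mutual_information (M \<Otimes>\<^sub>M cgauss N) 2 borel borel fst
      (\<lambda>(x, z). (\<Sum>i\<in>UNIV. complex_of_real (g i) * cis (\<theta> i) * x $ i) + z)"

definition pstar :: "('m::finite \<Rightarrow> real) \<Rightarrow> (complex ^ 'm) measure" where
  "pstar Pw = density lborel (\<lambda>x. ennreal (\<Prod>i\<in>UNIV. cgauss_density (Pw i) (x $ i)))"

definition angles :: "('m \<Rightarrow> real) set" where
  "angles = {\<theta>. \<forall>i. 0 \<le> \<theta> i \<and> \<theta> i < 2 * pi}"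

end

theory Submission
  imports Defs
begin

definition nd :: "real \<Rightarrow> real \<Rightarrow> real" where
  "nd a x = normal_density 0 (sqrt (a/2)) x"

lemma nd_eq: "a > 0 \<Longrightarrow> nd a x = exp (- x\<^sup>2 / a) / sqrt (pi * a)"
  by (simp add: nd_def normal_density_def field_simps real_sqrt_divide)

lemma cgauss_density_split: "a > 0 \<Longrightarrow> cgauss_density a z = nd a (Re z) * nd a (Im z)"
proof -
  assume a: "a > 0"
  have "nd a (Re z) * nd a (Im z) = exp (- (Re z)\<^sup>2 / a) * exp (- (Im z)\<^sup>2 / a) / (sqrt (pi * a) * sqrt (pi*a))"
    using a by (simp add: nd_eq)
  also have "sqrt (pi * a) * sqrt (pi*a) = pi * a" using a by simp
  also have "exp (- (Re z)\<^sup>2 / a) * exp (- (Im z)\<^sup>2 / a) = exp (- (cmod z)\<^sup>2 / a)"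
    using a by (simp add: exp_add[symmetric] cmod_power2 field_simps)
  finally show ?thesis by (simp add: cgauss_density_def)
qed

lemma cgauss_density_pos: "a > 0 \<Longrightarrow> cgauss_density a z > 0"
  by (simp add: cgauss_density_def)

lemma cgauss_density_le: "a > 0 \<Longrightarrow> cgauss_density a z \<le> 1 / (pi * a)"
  by (simp add: cgauss_density_def divide_right_mono)

lemma borel_measurable_cgauss_density[measurable]: "cgauss_density a \<in> borel_measurable borel"
  unfolding cgauss_density_def by measurable

lemma nd_measurable[measurable]: "nd a \<in> borel_measurable borel"
  unfolding nd_def by simp

lemma nd_nonneg[simp]: "0 \<le> nd a x"
  by (simp add: nd_def)

lemma nn_integral_complex_prod:
  fixes F G :: "real \<Rightarrow> ennreal"
  assumes [measurable]: "F \<in> borel_measurable borel" "G \<in> borel_measurable borel"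
  shows "(\<integral>\<^sup>+z. F (Re z) * G (Im z) \<partial>lborel) = (\<integral>\<^sup>+x. F x \<partial>lborel) * (\<integral>\<^sup>+x. G x \<partial>lborel)"
proof -
  define H where "H = (\<lambda>b::complex. if b = 1 then F else G)"
  have [measurable]: "H b \<in> borel_measurable borel" for b unfolding H_def by simp
  have "(\<integral>\<^sup>+z. (\<Prod>b\<in>Basis. H b (z \<bullet> b)) \<partial>lborel) = (\<Prod>b\<in>Basis. (\<integral>\<^sup>+x. H b x \<partial>lborel))"
    by (rule nn_integral_lborel_prod) auto
  moreover have "(\<Prod>b\<in>Basis. H b (z \<bullet> b)) = F (Re z) * G (Im z)" for z
    by (simp add: H_def Basis_complex_def inner_complex_def)
  ultimately show ?thesis by (simp add: H_def Basis_complex_def)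
qed

lemma nn_integral_nd: "a > 0 \<Longrightarrow> (\<integral>\<^sup>+x. ennreal (nd a x) \<partial>lborel) = 1"
  unfolding nd_def
  by (subst nn_integral_eq_integral) (auto simp: normal_density_nonneg)

lemma nn_integral_nd_sq: "a > 0 \<Longrightarrow> (\<integral>\<^sup>+x. ennreal (nd a x * x\<^sup>2) \<partial>lborel) = a / 2"
proof -
  assume a: "a > 0"
  have "has_bochner_integral lborel (\<lambda>x. normal_density 0 (sqrt (a/2)) x * (x - 0) ^ (2 * 1))
     (fact (2 * 1) / ((2 / (sqrt (a/2))\<^sup>2)^1 * fact 1))"
    by (rule normal_moment_even) (use a in simp)
  then have "has_bochner_integral lborel (\<lambda>x. nd a x * x\<^sup>2) (a/2)"
    using a by (simp add: nd_def)
  then have i: "integrable lborel (\<lambda>x. nd a x * x\<^sup>2)" and e: "(\<integral>x. nd a x * x\<^sup>2 \<partial>lborel) = a/2"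
    by (auto simp: has_bochner_integral_iff)
  have "(\<integral>\<^sup>+x. ennreal (nd a x * x\<^sup>2) \<partial>lborel) = ennreal (\<integral>x. nd a x * x\<^sup>2 \<partial>lborel)"
    by (rule nn_integral_eq_integral[OF i]) auto
  then show ?thesis by (simp only: e)
qed

lemma nn_integral_cgauss: "a > 0 \<Longrightarrow> (\<integral>\<^sup>+z. ennreal (cgauss_density a z) \<partial>lborel) = 1"
  by (simp add: cgauss_density_split ennreal_mult'
    nn_integral_complex_prod[where F="\<lambda>x. ennreal (nd a x)" and G="\<lambda>x. ennreal (nd a x)"] nn_integral_nd)

lemma prob_space_cgauss: "a > 0 \<Longrightarrow> prob_space (cgauss a)"
  unfolding cgauss_def by (rule prob_spaceI) (simp add: emeasure_density nn_integral_cgauss)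

lemma nn_integral_cgauss_sq: "a > 0 \<Longrightarrow> (\<integral>\<^sup>+z. ennreal (cgauss_density a z * (cmod z)\<^sup>2) \<partial>lborel) = a"
proof -
  assume a: "a > 0"
  have nn: "0 \<le> nd a x" for x by (simp add: nd_def normal_density_nonneg)
  have "(\<lambda>z. ennreal (cgauss_density a z * (cmod z)\<^sup>2)) =
     (\<lambda>z. ennreal (nd a (Re z) * (Re z)\<^sup>2) * ennreal (nd a (Im z)) + ennreal (nd a (Re z)) * ennreal (nd a (Im z) * (Im z)\<^sup>2))"
    using a nn by (auto simp: fun_eq_iff cgauss_density_split cmod_power2 ennreal_mult'[symmetric] ennreal_plus[symmetric] algebra_simps
        simp del: ennreal_plus)
  then have "(\<integral>\<^sup>+z. ennreal (cgauss_density a z * (cmod z)\<^sup>2) \<partial>lborel)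
      = (\<integral>\<^sup>+z. ennreal (nd a (Re z) * (Re z)\<^sup>2) * ennreal (nd a (Im z)) \<partial>lborel) + (\<integral>\<^sup>+z. ennreal (nd a (Re z)) * ennreal (nd a (Im z) * (Im z)\<^sup>2) \<partial>lborel)"
    by (simp add: nn_integral_add)
  also have "\<dots> = ennreal (a/2) + ennreal (a/2)"
    using a by (simp add: nn_integral_complex_prod[where F="\<lambda>x. ennreal (nd a x * x\<^sup>2)" and G="\<lambda>x. ennreal (nd a x)"]
        nn_integral_complex_prod[where G="\<lambda>x. ennreal (nd a x * x\<^sup>2)" and F="\<lambda>x. ennreal (nd a x)"]
        nn_integral_nd nn_integral_nd_sq)
  also have "\<dots> = ennreal (a/2 + a/2)" using a by (intro ennreal_plus[symmetric]) auto
  also have "\<dots> = a" by simp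
  finally show ?thesis .
qed


lemma nn_integral_exp_quad:
  fixes k \<alpha> :: real assumes k: "k > 0"
  shows "(\<integral>\<^sup>+t. ennreal (exp (- k * t\<^sup>2 + \<alpha> * t)) \<partial>lborel) = ennreal (sqrt (pi / k) * exp (\<alpha>\<^sup>2 / (4 * k)))"
proof -
  define C where "C = sqrt (pi / k) * exp (\<alpha>\<^sup>2 / (4 * k))"
  have C: "C > 0" using k by (simp add: C_def)
  have eq: "exp (- k * t\<^sup>2 + \<alpha> * t) = C * normal_density (\<alpha> / (2*k)) (sqrt (1/(2*k))) t" for t
  proof -
    have "normal_density (\<alpha> / (2*k)) (sqrt (1/(2*k))) t = 1 / sqrt (pi / k) * exp (- k * (t - \<alpha> / (2*k))\<^sup>2)"
      using k by (simp add: normal_density_def field_simps)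
    moreover have "- k * (t - \<alpha> / (2*k))\<^sup>2 = (- k * t\<^sup>2 + \<alpha> * t) - \<alpha>\<^sup>2 / (4 * k)"
      using k by (simp add: field_simps power2_eq_square)
    ultimately have "normal_density (\<alpha> / (2*k)) (sqrt (1/(2*k))) t = exp ((- k * t\<^sup>2 + \<alpha> * t) - \<alpha>\<^sup>2 / (4 * k)) / sqrt (pi / k)"
      by simp
    then show ?thesis
      using k by (simp add: C_def exp_diff)
  qed
  have "(\<integral>\<^sup>+t. ennreal (exp (- k * t\<^sup>2 + \<alpha> * t)) \<partial>lborel)
     = (\<integral>\<^sup>+t. ennreal C * ennreal (normal_density (\<alpha> / (2*k)) (sqrt (1/(2*k))) t) \<partial>lborel)"
    unfolding eq using C by (simp add: ennreal_mult' normal_density_nonneg)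
  also have "\<dots> = ennreal C * (\<integral>\<^sup>+t. ennreal (normal_density (\<alpha> / (2*k)) (sqrt (1/(2*k))) t) \<partial>lborel)"
    by (rule nn_integral_cmult) simp
  also have "(\<integral>\<^sup>+t. ennreal (normal_density (\<alpha> / (2*k)) (sqrt (1/(2*k))) t) \<partial>lborel) = 1"
    using k by (subst nn_integral_eq_integral) (auto simp: normal_density_nonneg)
  finally show ?thesis by (simp add: C_def)
qed

lemma conv_exponent:
  fixes u c w :: complex and a b :: real
  assumes a: "a > 0" and b: "b > 0"
  defines "k \<equiv> (cmod c)\<^sup>2 / a + 1 / b"
  defines "v \<equiv> cnj c * u"
  shows "- (cmod (u - c * w))\<^sup>2 / a - (cmod w)\<^sup>2 / b
     = - (cmod u)\<^sup>2 / a + ((- k * (Re w)\<^sup>2 + (2 * Re v / a) * Re w) + (- k * (Im w)\<^sup>2 + (2 * Im v / a) * Im w))"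
  using a b unfolding k_def v_def cmod_power2
  by (simp add: field_simps) (simp add: power2_eq_square algebra_simps)

lemma conv_aux: fixes a D q U b :: real
  assumes "a > 0" "D > 0" "D = a + q * b" shows "- U / a + q * U * b / (a * D) = - U / D"
proof -
  have "- U / a + q * U * b / (a * D) = (- U * D + q * U * b) / (a * D)"
    using assms(1,2) by (simp add: field_simps)
  also have "- U * D + q * U * b = - U * a" using assms(3) by (simp add: algebra_simps)
  finally show ?thesis using assms(1,2) by simp
qed

lemma cgauss_conv:
  fixes u c :: complex and a b :: real
  assumes a: "a > 0" and b: "b > 0"
  shows "(\<integral>\<^sup>+w. ennreal (cgauss_density a (u - c * w) * cgauss_density b w) \<partial>lborel)
     = ennreal (cgauss_density (a + (cmod c)\<^sup>2 * b) u)"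
proof -
  define k where "k = (cmod c)\<^sup>2 / a + 1 / b"
  define v where "v = cnj c * u"
  define K where "K = exp (- (cmod u)\<^sup>2 / a) / (pi * a * (pi * b))"
  define D where "D = a + (cmod c)\<^sup>2 * b"
  have k: "k > 0" using a b by (simp add: k_def add_nonneg_pos)
  have K: "K > 0" using a b by (simp add: K_def)
  have D: "D > 0" using a b by (simp add: D_def add_pos_nonneg)
  have pt: "cgauss_density a (u - c * w) * cgauss_density b w
     = K * (exp (- k * (Re w)\<^sup>2 + (2 * Re v / a) * Re w) * exp (- k * (Im w)\<^sup>2 + (2 * Im v / a) * Im w))" for w
  proof -
    have "cgauss_density a (u - c * w) * cgauss_density b w
        = exp (- (cmod (u - c * w))\<^sup>2 / a - (cmod w)\<^sup>2 / b) / (pi * a * (pi * b))"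
      by (simp add: cgauss_density_def exp_diff exp_minus field_simps)
    also have "\<dots> = K * (exp (- k * (Re w)\<^sup>2 + (2 * Re v / a) * Re w) * exp (- k * (Im w)\<^sup>2 + (2 * Im v / a) * Im w))"
      unfolding conv_exponent[OF a b, of u c w, folded k_def v_def] K_def exp_add
      by simp
    finally show ?thesis .
  qed
  have "(\<integral>\<^sup>+w. ennreal (cgauss_density a (u - c * w) * cgauss_density b w) \<partial>lborel)
     = (\<integral>\<^sup>+w. ennreal K * (ennreal (exp (- k * (Re w)\<^sup>2 + (2 * Re v / a) * Re w)) * ennreal (exp (- k * (Im w)\<^sup>2 + (2 * Im v / a) * Im w))) \<partial>lborel)"
    using K by (simp add: pt ennreal_mult')
  also have "\<dots> = ennreal K * (\<integral>\<^sup>+w. ennreal (exp (- k * (Re w)\<^sup>2 + (2 * Re v / a) * Re w)) * ennreal (exp (- k * (Im w)\<^sup>2 + (2 * Im v / a) * Im w)) \<partial>lborel)"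
    by (rule nn_integral_cmult) simp
  also have "(\<integral>\<^sup>+w. ennreal (exp (- k * (Re w)\<^sup>2 + (2 * Re v / a) * Re w)) * ennreal (exp (- k * (Im w)\<^sup>2 + (2 * Im v / a) * Im w)) \<partial>lborel)
     = ennreal (sqrt (pi / k) * exp ((2 * Re v / a)\<^sup>2 / (4 * k))) * ennreal (sqrt (pi / k) * exp ((2 * Im v / a)\<^sup>2 / (4 * k)))"
    by (subst nn_integral_complex_prod[where F="\<lambda>x. ennreal (exp (- k * x\<^sup>2 + (2 * Re v / a) * x))"
          and G="\<lambda>x. ennreal (exp (- k * x\<^sup>2 + (2 * Im v / a) * x))"])
       (simp, simp, simp only: nn_integral_exp_quad[OF k])
  also have "ennreal K * (ennreal (sqrt (pi / k) * exp ((2 * Re v / a)\<^sup>2 / (4 * k))) * ennreal (sqrt (pi / k) * exp ((2 * Im v / a)\<^sup>2 / (4 * k))))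
     = ennreal (K * (sqrt (pi / k) * exp ((2 * Re v / a)\<^sup>2 / (4 * k)) * (sqrt (pi / k) * exp ((2 * Im v / a)\<^sup>2 / (4 * k)))))"
    using K k by (simp add: ennreal_mult')
  also have "K * (sqrt (pi / k) * exp ((2 * Re v / a)\<^sup>2 / (4 * k)) * (sqrt (pi / k) * exp ((2 * Im v / a)\<^sup>2 / (4 * k))))
      = cgauss_density D u"
  proof -
    have s: "sqrt (pi / k) * sqrt (pi / k) = pi / k" using k by simp
    have vv: "(Re v)\<^sup>2 + (Im v)\<^sup>2 = (cmod c)\<^sup>2 * (cmod u)\<^sup>2"
      unfolding v_def cmod_power2 by (simp add: power2_eq_square algebra_simps)
    have abk: "a * b * k = D" using a b by (simp add: k_def D_def field_simps)
    have e: "- (cmod u)\<^sup>2 / a + ((2 * Re v / a)\<^sup>2 / (4 * k) + (2 * Im v / a)\<^sup>2 / (4 * k)) = - (cmod u)\<^sup>2 / D"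
    proof -
      have "(2 * Re v / a)\<^sup>2 / (4 * k) + (2 * Im v / a)\<^sup>2 / (4 * k) = ((Re v)\<^sup>2 + (Im v)\<^sup>2) / (a\<^sup>2 * k)"
        using a k by (simp add: field_simps power2_eq_square)
      also have "\<dots> = (cmod c)\<^sup>2 * (cmod u)\<^sup>2 * b / (a * D)"
        unfolding vv using a b k abk[symmetric] by (simp add: field_simps power2_eq_square)
      finally have 1: "(2 * Re v / a)\<^sup>2 / (4 * k) + (2 * Im v / a)\<^sup>2 / (4 * k) = (cmod c)\<^sup>2 * (cmod u)\<^sup>2 * b / (a * D)" .
      show ?thesis unfolding 1 using a D by (intro conv_aux) (auto simp: D_def)
    qed
    have "K * (sqrt (pi / k) * exp ((2 * Re v / a)\<^sup>2 / (4 * k)) * (sqrt (pi / k) * exp ((2 * Im v / a)\<^sup>2 / (4 * k))))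
      = exp (- (cmod u)\<^sup>2 / a + ((2 * Re v / a)\<^sup>2 / (4 * k) + (2 * Im v / a)\<^sup>2 / (4 * k))) / (pi * a * (pi * b)) * (pi / k)"
    proof -
      have "K * (sqrt (pi / k) * exp ((2 * Re v / a)\<^sup>2 / (4 * k)) * (sqrt (pi / k) * exp ((2 * Im v / a)\<^sup>2 / (4 * k))))
          = K * (sqrt (pi / k) * sqrt (pi / k)) * (exp ((2 * Re v / a)\<^sup>2 / (4 * k)) * exp ((2 * Im v / a)\<^sup>2 / (4 * k)))"
        by (simp only: ac_simps)
      also have "\<dots> = K * (pi / k) * exp ((2 * Re v / a)\<^sup>2 / (4 * k) + (2 * Im v / a)\<^sup>2 / (4 * k))"
        by (simp only: s exp_add)
      also have "\<dots> = exp (- (cmod u)\<^sup>2 / a + ((2 * Re v / a)\<^sup>2 / (4 * k) + (2 * Im v / a)\<^sup>2 / (4 * k))) / (pi * a * (pi * b)) * (pi / k)"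
        by (simp only: K_def exp_add) simp
      finally show ?thesis .
    qed
    also have "\<dots> = exp (- (cmod u)\<^sup>2 / D) / (pi * D)"
      unfolding e abk[symmetric] using a b k by (simp add: field_simps)
    finally show ?thesis by (simp add: cgauss_density_def)
  qed
  finally show ?thesis by (simp add: D_def)
qed


lemma vec_lambda_measurable[measurable]:
  "(\<lambda>f. vec_lambda f :: complex ^ 'm::finite) \<in> measurable (Pi\<^sub>M UNIV (\<lambda>_. lborel)) borel"
proof (subst borel_measurable_euclidean_space, intro ballI)
  fix b :: "complex ^ 'm" assume "b \<in> Basis"
  then obtain i c where b: "b = axis i c" "c \<in> Basis" unfolding Basis_vec_def by auto
  have "(\<lambda>f. (\<chi> i. f i) \<bullet> b) = (\<lambda>f. f i \<bullet> c)" by (simp add: b inner_axis)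
  then show "(\<lambda>f. (\<chi> i. f i) \<bullet> b) \<in> borel_measurable (Pi\<^sub>M UNIV (\<lambda>_. lborel))"
    by simp
qed

lemma mem_box_vec: "(x :: complex ^ 'm::finite) \<in> box l u \<longleftrightarrow> (\<forall>i. x $ i \<in> box (l $ i) (u $ i))"
  unfolding mem_box Basis_vec_def by (auto simp: inner_axis)

lemma prod_Basis_vec:
  fixes F :: "complex ^ 'm::finite \<Rightarrow> real"
  shows "(\<Prod>b\<in>Basis. F b) = (\<Prod>i\<in>UNIV. \<Prod>c\<in>Basis. F (axis i c))"
proof -
  have B: "(Basis :: (complex ^ 'm) set) = (\<lambda>(i, c). axis i c) ` (UNIV \<times> Basis)"
    unfolding Basis_vec_def by auto
  have inj: "inj_on (\<lambda>(i, c). axis i c :: complex ^ 'm) (UNIV \<times> Basis)"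
    by (auto simp: inj_on_def axis_eq_axis nonzero_Basis)
  show ?thesis unfolding B prod.reindex[OF inj]
    by (simp add: prod.cartesian_product split_def)
qed

lemma lborel_vec: "(lborel :: (complex ^ 'm::finite) measure) = distr (Pi\<^sub>M UNIV (\<lambda>_. lborel)) borel vec_lambda"
proof (rule lborel_eqI)
  interpret finite_product_sigma_finite "\<lambda>_::'m. lborel :: complex measure" UNIV
    by standard simp
  fix l u :: "complex ^ 'm" assume le: "\<And>b. b \<in> Basis \<Longrightarrow> l \<bullet> b \<le> u \<bullet> b"
  have pre: "vec_lambda -` box l u \<inter> space (Pi\<^sub>M UNIV (\<lambda>_. lborel)) = Pi\<^sub>E UNIV (\<lambda>i. box (l $ i) (u $ i))"
    unfolding space_PiM space_lborel by (auto simp: mem_box_vec PiE_iff)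
  have le': "l $ i \<bullet> c \<le> u $ i \<bullet> c" if c: "c \<in> Basis" for i c
  proof -
    have "axis i c \<in> (Basis :: (complex ^ 'm) set)" using c by (auto simp: Basis_vec_def)
    from le[OF this] show ?thesis by (simp add: inner_axis)
  qed
  have "emeasure (distr (Pi\<^sub>M UNIV (\<lambda>_. lborel)) borel vec_lambda) (box l u)
      = emeasure (Pi\<^sub>M UNIV (\<lambda>_. lborel)) (Pi\<^sub>E UNIV (\<lambda>i. box (l $ i) (u $ i)))"
    by (subst emeasure_distr) (auto simp only: pre vec_lambda_measurable sets_borel intro: open_box borel_open)
  also have "\<dots> = (\<Prod>i\<in>UNIV. emeasure lborel (box (l $ i) (u $ i)))"
    by (rule emeasure_PiM) auto
  also have "\<dots> = (\<Prod>i\<in>UNIV. ennreal (\<Prod>c\<in>Basis. (u $ i - l $ i) \<bullet> c))"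
    using le' by (intro prod.cong refl) (simp add: emeasure_lborel_box_eq inner_diff_left)
  also have "\<dots> = ennreal (\<Prod>i\<in>UNIV. \<Prod>c\<in>Basis. (u $ i - l $ i) \<bullet> c)"
    using le' by (intro prod_ennreal) (simp add: prod_nonneg inner_diff_left)
  also have "(\<Prod>i\<in>UNIV. \<Prod>c\<in>Basis. (u $ i - l $ i) \<bullet> c) = (\<Prod>b\<in>Basis. (u - l) \<bullet> b)"
    by (simp add: prod_Basis_vec inner_axis)
  finally show "emeasure (distr (Pi\<^sub>M UNIV (\<lambda>_. lborel)) borel vec_lambda) (box l u) = (\<Prod>b\<in>Basis. (u - l) \<bullet> b)" .
qed simp

lemma vec_nth_measurable[measurable]: "(\<lambda>x::'a::euclidean_space^'n. x $ i) \<in> borel_measurable borel"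
  by (intro borel_measurable_continuous_onI linear_continuous_on bounded_linear_vec_nth)

interpretation lb: product_sigma_finite "\<lambda>_. lborel :: complex measure"
  by standard

lemma cgauss_density_nonneg[simp]: "a > 0 \<Longrightarrow> 0 \<le> cgauss_density a z"
  using cgauss_density_pos[of a z] by simp

lemma nn_integral_pstar:
  fixes Pw :: "'m::finite \<Rightarrow> real"
  assumes [measurable]: "h \<in> borel_measurable borel" and P: "\<And>i. Pw i > 0"
  shows "(\<integral>\<^sup>+x. h x \<partial>pstar Pw) =
    (\<integral>\<^sup>+f. (\<Prod>i\<in>UNIV. ennreal (cgauss_density (Pw i) (f i))) * h (vec_lambda f) \<partial>Pi\<^sub>M UNIV (\<lambda>_. lborel))"
proof -
  have [measurable]: "(\<lambda>x::complex^'m. \<Prod>i\<in>UNIV. cgauss_density (Pw i) (x $ i)) \<in> borel_measurable borel"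
    by measurable
  have "(\<integral>\<^sup>+x. h x \<partial>pstar Pw) = (\<integral>\<^sup>+x. ennreal (\<Prod>i\<in>UNIV. cgauss_density (Pw i) (x $ i)) * h x \<partial>lborel)"
    unfolding pstar_def by (rule nn_integral_density) measurable
  also have "\<dots> = (\<integral>\<^sup>+f. ennreal (\<Prod>i\<in>UNIV. cgauss_density (Pw i) (vec_lambda f $ i)) * h (vec_lambda f) \<partial>Pi\<^sub>M UNIV (\<lambda>_. lborel))"
    by (subst lborel_vec, subst nn_integral_distr) simp_all
  also have "\<dots> = (\<integral>\<^sup>+f. (\<Prod>i\<in>UNIV. ennreal (cgauss_density (Pw i) (f i))) * h (vec_lambda f) \<partial>Pi\<^sub>M UNIV (\<lambda>_. lborel))"
    using P by (simp add: prod_ennreal)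
  finally show ?thesis .
qed

lemma conv_prod:
  fixes Pw :: "'m \<Rightarrow> real" and c :: "'m \<Rightarrow> complex"
  assumes I: "finite I" and P: "\<And>i. Pw i > 0"
  shows "a > 0 \<Longrightarrow> (\<integral>\<^sup>+f. (\<Prod>i\<in>I. ennreal (cgauss_density (Pw i) (f i))) * ennreal (cgauss_density a (y - (\<Sum>i\<in>I. c i * f i))) \<partial>Pi\<^sub>M I (\<lambda>_. lborel))
     = ennreal (cgauss_density (a + (\<Sum>i\<in>I. (cmod (c i))\<^sup>2 * Pw i)) y)"
  using I
proof (induction I arbitrary: a y rule: finite_induct)
  case empty
  then show ?case by (simp add: lb.nn_integral_empty space_PiM_empty)
next
  case (insert k I)
  have [measurable]: "(\<lambda>f. (\<Prod>i\<in>insert k I. ennreal (cgauss_density (Pw i) (f i))) * ennreal (cgauss_density a (y - (\<Sum>i\<in>insert k I. c i * f i))))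
       \<in> borel_measurable (Pi\<^sub>M (insert k I) (\<lambda>_. lborel))"
    by measurable
  have a': "a + (cmod (c k))\<^sup>2 * Pw k > 0" using insert.prems P[of k] by (simp add: add_pos_nonneg)
  have eqf: "(\<Prod>i\<in>insert k I. ennreal (cgauss_density (Pw i) ((x(k := v)) i))) * ennreal (cgauss_density a (y - (\<Sum>i\<in>insert k I. c i * (x(k := v)) i)))
      = (\<Prod>i\<in>I. ennreal (cgauss_density (Pw i) (x i))) * (ennreal (cgauss_density a ((y - (\<Sum>i\<in>I. c i * x i)) - c k * v) * cgauss_density (Pw k) v))" for x v
  proof -
    have 1: "(\<Prod>i\<in>I. ennreal (cgauss_density (Pw i) (if i = k then v else x i))) = (\<Prod>i\<in>I. ennreal (cgauss_density (Pw i) (x i)))"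
      using insert.hyps by (intro prod.cong) auto
    have 2: "(\<Sum>i\<in>I. c i * (if i = k then v else x i)) = (\<Sum>i\<in>I. c i * x i)"
      using insert.hyps by (intro sum.cong) auto
    show ?thesis using insert.hyps insert.prems P[of k]
      by (simp add: 1 2 ennreal_mult' algebra_simps)
  qed
  have "(\<integral>\<^sup>+f. (\<Prod>i\<in>insert k I. ennreal (cgauss_density (Pw i) (f i))) * ennreal (cgauss_density a (y - (\<Sum>i\<in>insert k I. c i * f i))) \<partial>Pi\<^sub>M (insert k I) (\<lambda>_. lborel))
     = (\<integral>\<^sup>+x. (\<integral>\<^sup>+v. (\<Prod>i\<in>insert k I. ennreal (cgauss_density (Pw i) ((x(k := v)) i))) * ennreal (cgauss_density a (y - (\<Sum>i\<in>insert k I. c i * (x(k := v)) i))) \<partial>lborel) \<partial>Pi\<^sub>M I (\<lambda>_. lborel))"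
    by (rule lb.product_nn_integral_insert) (use insert.hyps in auto)
  also have "\<dots> = (\<integral>\<^sup>+x. (\<integral>\<^sup>+v. (\<Prod>i\<in>I. ennreal (cgauss_density (Pw i) (x i))) * (ennreal (cgauss_density a ((y - (\<Sum>i\<in>I. c i * x i)) - c k * v) * cgauss_density (Pw k) v)) \<partial>lborel) \<partial>Pi\<^sub>M I (\<lambda>_. lborel))"
    by (simp only: eqf)
  also have "\<dots> = (\<integral>\<^sup>+x. (\<Prod>i\<in>I. ennreal (cgauss_density (Pw i) (x i))) * ennreal (cgauss_density (a + (cmod (c k))\<^sup>2 * Pw k) (y - (\<Sum>i\<in>I. c i * x i))) \<partial>Pi\<^sub>M I (\<lambda>_. lborel))"
    by (intro nn_integral_cong, subst nn_integral_cmult) (simp_all add: cgauss_conv insert.prems P)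
  also have "\<dots> = ennreal (cgauss_density (a + (cmod (c k))\<^sup>2 * Pw k + (\<Sum>i\<in>I. (cmod (c i))\<^sup>2 * Pw i)) y)"
    by (rule insert.IH[OF a'])
  also have "a + (cmod (c k))\<^sup>2 * Pw k + (\<Sum>i\<in>I. (cmod (c i))\<^sup>2 * Pw i) = a + (\<Sum>i\<in>insert k I. (cmod (c i))\<^sup>2 * Pw i)"
    using insert.hyps by simp
  finally show ?case .
qed


lemma pstar_prod_integral:
  fixes Pw :: "'m::finite \<Rightarrow> real"
  assumes P: "\<And>i. Pw i > 0" and [measurable]: "\<And>i. F i \<in> borel_measurable borel"
  shows "(\<integral>\<^sup>+x. (\<Prod>i\<in>UNIV. F i (x $ i)) \<partial>pstar Pw) = (\<Prod>i\<in>UNIV. \<integral>\<^sup>+z. ennreal (cgauss_density (Pw i) z) * F i z \<partial>lborel)"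
proof -
  have "(\<integral>\<^sup>+x. (\<Prod>i\<in>UNIV. F i (x $ i)) \<partial>pstar Pw)
     = (\<integral>\<^sup>+f. (\<Prod>i\<in>UNIV. ennreal (cgauss_density (Pw i) (f i))) * (\<Prod>i\<in>UNIV. F i (vec_lambda f $ i)) \<partial>Pi\<^sub>M UNIV (\<lambda>_. lborel))"
    using P by (subst nn_integral_pstar) simp_all
  also have "\<dots> = (\<integral>\<^sup>+f. (\<Prod>i\<in>UNIV. ennreal (cgauss_density (Pw i) (f i)) * F i (f i)) \<partial>Pi\<^sub>M UNIV (\<lambda>_. lborel))"
    by (simp add: prod.distrib)
  also have "\<dots> = (\<Prod>i\<in>UNIV. \<integral>\<^sup>+z. ennreal (cgauss_density (Pw i) z) * F i z \<partial>lborel)"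
    by (rule lb.product_nn_integral_prod) simp_all
  finally show ?thesis .
qed

lemma prob_space_pstar:
  fixes Pw :: "'m::finite \<Rightarrow> real"
  assumes P: "\<And>i. Pw i > 0"
  shows "prob_space (pstar Pw)"
proof (rule prob_spaceI)
  have "emeasure (pstar Pw) (space (pstar Pw)) = (\<integral>\<^sup>+x. (\<Prod>i\<in>UNIV. (\<lambda>_ _. 1::ennreal) i (x $ i)) \<partial>pstar Pw)"
    by (simp add: nn_integral_const)
  also have "\<dots> = 1"
    using P by (subst pstar_prod_integral) (simp_all add: nn_integral_cgauss)
  finally show "emeasure (pstar Pw) (space (pstar Pw)) = 1" .
qed

lemma sets_pstar[simp, measurable_cong]: "sets (pstar Pw) = sets borel"
  by (simp add: pstar_def)

lemma pstar_moment:
  fixes Pw :: "'m::finite \<Rightarrow> real"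
  assumes P: "\<And>i. Pw i > 0"
  shows "(\<integral>\<^sup>+x. ennreal ((cmod (x $ k))\<^sup>2) \<partial>pstar Pw) = Pw k"
proof -
  define F where "F = (\<lambda>i z. if i = k then ennreal ((cmod z)\<^sup>2) else 1)"
  have [measurable]: "F i \<in> borel_measurable borel" for i unfolding F_def by simp
  have "(\<integral>\<^sup>+x. ennreal ((cmod (x $ k))\<^sup>2) \<partial>pstar Pw) = (\<integral>\<^sup>+x. (\<Prod>i\<in>UNIV. F i (x $ i)) \<partial>pstar Pw)"
    by (simp add: F_def prod.If_cases)
  also have "\<dots> = (\<Prod>i\<in>UNIV. \<integral>\<^sup>+z. ennreal (cgauss_density (Pw i) z) * F i z \<partial>lborel)"
    using P by (rule pstar_prod_integral) simp
  also have "\<dots> = (\<Prod>i\<in>UNIV. if i = k then ennreal (Pw k) else 1)"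
    using P by (intro prod.cong refl) (auto simp: F_def nn_integral_cgauss ennreal_mult'[symmetric] nn_integral_cgauss_sq)
  also have "\<dots> = Pw k" by (simp add: prod.If_cases)
  finally show ?thesis .
qed

lemma pstar_admissible:
  fixes Pw :: "'m::finite \<Rightarrow> real"
  assumes P: "\<And>i. Pw i > 0"
  shows "pstar Pw \<in> admissible Pw"
  using P by (simp add: admissible_def prob_space_pstar pstar_moment)

lemma pstar_conv:
  fixes Pw :: "'m::finite \<Rightarrow> real" and c :: "'m \<Rightarrow> complex"
  assumes P: "\<And>i. Pw i > 0" and a: "a > 0"
  shows "(\<integral>\<^sup>+x. ennreal (cgauss_density a (y - (\<Sum>i\<in>UNIV. c i * x $ i))) \<partial>pstar Pw)
     = ennreal (cgauss_density (a + (\<Sum>i\<in>UNIV. (cmod (c i))\<^sup>2 * Pw i)) y)"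
  using P by (subst nn_integral_pstar) (simp_all add: conv_prod[OF finite[of UNIV] P a])

lemma nn_integral_translate:
  fixes f :: "'a::euclidean_space \<Rightarrow> ennreal"
  assumes [measurable]: "f \<in> borel_measurable borel"
  shows "(\<integral>\<^sup>+z. f (s + z) \<partial>lborel) = (\<integral>\<^sup>+z. f z \<partial>lborel)"
proof -
  have "(\<integral>\<^sup>+z. f z \<partial>lborel) = (\<integral>\<^sup>+z. f z \<partial>distr lborel borel ((+) s))"
    by (simp add: lborel_distr_plus)
  also have "\<dots> = (\<integral>\<^sup>+z. f (s + z) \<partial>lborel)"
    by (subst nn_integral_distr) simp_all
  finally show ?thesis by simp
qed

lemma nn_integral_normal_sq:
  assumes s: "\<sigma> > 0"
  shows "(\<integral>\<^sup>+x. ennreal (normal_density m \<sigma> x * x\<^sup>2) \<partial>lborel) = \<sigma>\<^sup>2 + m\<^sup>2"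
proof -
  have i1: "integrable lborel (\<lambda>x. normal_density m \<sigma> x * (x - m) ^ 2)"
    using integrable_normal_moment[of \<sigma> m 2] s by simp
  have v1: "(\<integral>x. normal_density m \<sigma> x * (x - m) ^ 2 \<partial>lborel) = \<sigma>\<^sup>2"
    using integral_normal_moment_even[of \<sigma> m 1] s by (simp add: power2_eq_square)
  have i2: "integrable lborel (\<lambda>x. normal_density m \<sigma> x * x)" using s by (rule integrable_normal_moment_nz_1)
  have v2: "(\<integral>x. normal_density m \<sigma> x * x \<partial>lborel) = m" using s by (rule integral_normal_moment_nz_1)
  have i3: "integrable lborel (normal_density m \<sigma>)" by (rule integrable_normal_density[OF s])
  have v3: "(\<integral>x. normal_density m \<sigma> x \<partial>lborel) = 1" using s by simp
  have eq: "normal_density m \<sigma> x * x\<^sup>2 = normal_density m \<sigma> x * (x - m) ^ 2 + 2 * m * (normal_density m \<sigma> x * x) - m\<^sup>2 * normal_density m \<sigma> x" for x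
    by (simp add: power2_eq_square algebra_simps)
  have i: "integrable lborel (\<lambda>x. normal_density m \<sigma> x * x\<^sup>2)"
    unfolding eq using i1 i2 i3 by simp
  have v: "(\<integral>x. normal_density m \<sigma> x * x\<^sup>2 \<partial>lborel) = \<sigma>\<^sup>2 + m\<^sup>2"
    unfolding eq using i1 i2 i3 v1 v2 v3 by (simp add: power2_eq_square)
  show ?thesis
    by (subst nn_integral_eq_integral[OF i]) (simp_all add: v normal_density_nonneg)
qed

lemma cgauss_shift_sq:
  assumes a: "a > 0"
  shows "(\<integral>\<^sup>+z. ennreal (cgauss_density a z * (cmod (s + z))\<^sup>2) \<partial>lborel) = a + (cmod s)\<^sup>2"
proof -
  have sq: "0 < sqrt (a/2)" using a by simp
  have "(\<integral>\<^sup>+z. ennreal (cgauss_density a z * (cmod (s + z))\<^sup>2) \<partial>lborel)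
     = (\<integral>\<^sup>+z. (\<lambda>y. ennreal (cgauss_density a (y - s) * (cmod y)\<^sup>2)) (s + z) \<partial>lborel)"
    by simp
  also have "\<dots> = (\<integral>\<^sup>+y. ennreal (cgauss_density a (y - s) * (cmod y)\<^sup>2) \<partial>lborel)"
    by (rule nn_integral_translate) simp
  also have "\<dots> = (\<integral>\<^sup>+y. ennreal (normal_density (Re s) (sqrt (a/2)) (Re y) * (Re y)\<^sup>2) * ennreal (normal_density (Im s) (sqrt (a/2)) (Im y))
                   + ennreal (normal_density (Re s) (sqrt (a/2)) (Re y)) * ennreal (normal_density (Im s) (sqrt (a/2)) (Im y) * (Im y)\<^sup>2) \<partial>lborel)"
    using a by (intro nn_integral_cong)
      (simp add: cgauss_density_split nd_def normal_density_nonneg cmod_power2 ennreal_mult'[symmetric]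
        ennreal_plus[symmetric] algebra_simps normal_density_def add_divide_distrib del: ennreal_plus)
  also have "\<dots> = ennreal ((sqrt (a/2))\<^sup>2 + (Re s)\<^sup>2) * 1 + 1 * ennreal ((sqrt (a/2))\<^sup>2 + (Im s)\<^sup>2)"
    using a
    apply (subst nn_integral_add, simp, simp)
    apply (subst nn_integral_complex_prod[where F="\<lambda>x. ennreal (normal_density (Re s) (sqrt (a/2)) x * x\<^sup>2)" and G="\<lambda>x. ennreal (normal_density (Im s) (sqrt (a/2)) x)"], simp, simp)
    apply (subst nn_integral_complex_prod[where G="\<lambda>x. ennreal (normal_density (Im s) (sqrt (a/2)) x * x\<^sup>2)" and F="\<lambda>x. ennreal (normal_density (Re s) (sqrt (a/2)) x)"], simp, simp)
    apply (simp only: nn_integral_normal_sq[OF sq])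
    apply (subst (1 2) nn_integral_eq_integral)
    apply (auto simp: normal_density_nonneg)
    done
  also have "\<dots> = ennreal (a + (cmod s)\<^sup>2)"
    using a by (simp add: cmod_power2 ennreal_plus[symmetric] del: ennreal_plus)
  finally show ?thesis .
qed


lemma xlog_ge: fixes x y :: real assumes "x > 0" "y > 0"
  shows "x * log 2 (x / y) \<ge> (x - y) / ln 2"
proof -
  have "ln (y / x) \<le> y / x - 1" using assms by (intro ln_le_minus_one) simp
  then have "ln (x / y) \<ge> 1 - y / x" using assms by (simp add: ln_div)
  then have "x * ln (x / y) \<ge> x * (1 - y / x)" using assms by (intro mult_left_mono) auto
  then have "x * ln (x / y) \<ge> x - y" using assms by (simp add: algebra_simps)
  then show ?thesis using assms by (simp add: log_def divide_right_mono)
qed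

lemma gibbs:
  fixes q g :: "'a \<Rightarrow> real" and L :: "'a measure"
  assumes pos: "\<And>y. q y > 0" "\<And>y. g y > 0"
    and iq: "integrable L q" "(\<integral>y. q y \<partial>L) = 1"
    and ig: "integrable L g" "(\<integral>y. g y \<partial>L) = 1"
    and i: "integrable L (\<lambda>y. q y * log 2 (q y / g y))"
  shows "(\<integral>y. q y * log 2 (q y / g y) \<partial>L) \<ge> 0"
proof -
  have "(\<integral>y. (q y - g y) / ln 2 \<partial>L) \<le> (\<integral>y. q y * log 2 (q y / g y) \<partial>L)"
    using iq ig i pos by (intro integral_mono xlog_ge) auto
  moreover have "(\<integral>y. (q y - g y) / ln 2 \<partial>L) = 0"
    using iq ig by simp
  ultimately show ?thesis by simp
qed

locale chan = prob_space M for M :: "'a::euclidean_space measure" +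
  fixes N :: real and s :: "'a \<Rightarrow> complex"
  assumes N: "N > 0" and sets_M[measurable_cong]: "sets M = sets borel"
    and s_meas[measurable]: "s \<in> borel_measurable borel"
begin

definition "Pr = M \<Otimes>\<^sub>M cgauss N"
definition "Y = (\<lambda>(x::'a, z::complex). s x + z)"
definition "qY y = (\<integral>\<^sup>+x. ennreal (cgauss_density N (y - s x)) \<partial>M)"
definition "qYr y = enn2real (qY y)"
definition "PY = distr Pr borel Y"
definition "J = distr Pr (borel \<Otimes>\<^sub>M borel) (\<lambda>\<omega>. (fst \<omega>, Y \<omega>))"
definition "r = (\<lambda>(x, y). cgauss_density N (y - s x) / qYr y)"

lemma space_M: "space M = UNIV"
  using sets_eq_imp_space_eq[OF sets_M] by simp

lemma s_measM[measurable]: "s \<in> borel_measurable M"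
  using s_meas by (simp add: measurable_cong_sets[OF sets_M refl])

lemma cg_prob: "prob_space (cgauss N)" using N by (rule prob_space_cgauss)

lemma sets_cgauss[simp, measurable_cong]: "sets (cgauss N) = sets borel"
  by (simp add: cgauss_def)

lemma prob_Pr: "prob_space Pr"
  unfolding Pr_def by (intro prob_space_pair prob_space_axioms cg_prob)

lemma sets_Pr[measurable_cong]: "sets Pr = sets (borel \<Otimes>\<^sub>M borel)"
  unfolding Pr_def by (intro sets_pair_measure_cong sets_M sets_cgauss)

lemma Y_meas[measurable]: "Y \<in> borel_measurable (borel \<Otimes>\<^sub>M borel)"
  unfolding Y_def by measurable

lemma nn_Pr:
  assumes [measurable]: "h \<in> borel_measurable (borel \<Otimes>\<^sub>M borel)"
  shows "(\<integral>\<^sup>+\<omega>. h \<omega> \<partial>Pr) = (\<integral>\<^sup>+x. (\<integral>\<^sup>+z. ennreal (cgauss_density N z) * h (x, z) \<partial>lborel) \<partial>M)"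
proof -
  interpret cg: prob_space "cgauss N" by (rule cg_prob)
  have hm: "h \<in> borel_measurable (M \<Otimes>\<^sub>M cgauss N)"
    using assms by (simp add: measurable_cong_sets[OF sets_pair_measure_cong[OF sets_M sets_cgauss] refl])
  have "(\<integral>\<^sup>+\<omega>. h \<omega> \<partial>Pr) = (\<integral>\<^sup>+x. (\<integral>\<^sup>+z. h (x, z) \<partial>cgauss N) \<partial>M)"
    unfolding Pr_def by (rule cg.nn_integral_fst[symmetric, OF hm])
  also have "\<dots> = (\<integral>\<^sup>+x. (\<integral>\<^sup>+z. ennreal (cgauss_density N z) * h (x, z) \<partial>lborel) \<partial>M)"
    unfolding cgauss_def by (intro nn_integral_cong nn_integral_density) simp_all
  finally show ?thesis .
qed

lemma qY_meas[measurable]: "qY \<in> borel_measurable borel"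
proof -
  have "(\<lambda>y. \<integral>\<^sup>+x. ennreal (cgauss_density N (y - s x)) \<partial>M) \<in> borel_measurable (borel :: complex measure)"
    by (rule borel_measurable_nn_integral_fst[where f="\<lambda>(y,x). ennreal (cgauss_density N (y - s x))", simplified])
      (simp add: measurable_cong_sets[OF sets_pair_measure_cong[OF refl sets_M] refl])
  then show ?thesis by (simp add: qY_def[abs_def])
qed

lemma qY_pos: "qY y > 0"
proof -
  have "qY y \<noteq> 0"
  proof
    assume "qY y = 0"
    then have "AE x in M. ennreal (cgauss_density N (y - s x)) = 0"
      unfolding qY_def by (subst (asm) nn_integral_0_iff_AE) simp_all
    then have "AE x in M. False"
      by eventually_elim (metis cgauss_density_pos[OF N] less_irrefl ennreal_eq_0_iff less_imp_le not_le)
    then show False by (simp add: AE_False)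
  qed
  then show ?thesis by (simp add: zero_less_iff_neq_zero)
qed

lemma qY_le: "qY y \<le> ennreal (1 / (pi * N))"
proof -
  have "qY y \<le> (\<integral>\<^sup>+x. ennreal (1 / (pi * N)) \<partial>M)"
    unfolding qY_def using N by (intro nn_integral_mono) (simp add: cgauss_density_le)
  also have "\<dots> = ennreal (1 / (pi * N))" by (simp add: emeasure_space_1)
  finally show ?thesis .
qed

lemma qY_fin: "qY y < \<top>"
  using qY_le[of y] by (simp add: le_less_trans)

lemma qY_eq: "qY y = ennreal (qYr y)"
  using qY_fin[of y] by (simp add: qYr_def)

lemma qYr_pos: "qYr y > 0"
  using qY_pos[of y] qY_fin[of y] by (simp add: qYr_def enn2real_positive_iff)

lemma qYr_meas[measurable]: "qYr \<in> borel_measurable borel"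
  unfolding qYr_def[abs_def] by measurable

lemma PY_eq: "PY = density lborel qY"
proof (rule measure_eqI)
  show "sets PY = sets (density lborel qY)" by (simp add: PY_def)
  fix A :: "complex set" assume "A \<in> sets PY"
  then have A[measurable]: "A \<in> sets borel" by (simp add: PY_def)
  have "emeasure PY A = (\<integral>\<^sup>+\<omega>. indicator A (Y \<omega>) \<partial>Pr)"
  proof -
    have "emeasure PY A = emeasure Pr (Y -` A \<inter> space Pr)"
      unfolding PY_def by (rule emeasure_distr) (simp_all add: measurable_cong_sets[OF sets_Pr refl])
    also have "\<dots> = (\<integral>\<^sup>+\<omega>. indicator (Y -` A \<inter> space Pr) \<omega> \<partial>Pr)"
      by (rule nn_integral_indicator[symmetric]) (simp add: measurable_cong_sets[OF sets_Pr refl])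
    also have "\<dots> = (\<integral>\<^sup>+\<omega>. indicator A (Y \<omega>) \<partial>Pr)"
      by (intro nn_integral_cong) (auto split: split_indicator)
    finally show ?thesis .
  qed
  also have "\<dots> = (\<integral>\<^sup>+x. (\<integral>\<^sup>+z. ennreal (cgauss_density N z) * indicator A (s x + z) \<partial>lborel) \<partial>M)"
    by (subst nn_Pr) (simp_all add: Y_def)
  also have "\<dots> = (\<integral>\<^sup>+x. (\<integral>\<^sup>+y. ennreal (cgauss_density N (y - s x)) * indicator A y \<partial>lborel) \<partial>M)"
  proof -
    have tr: "(\<integral>\<^sup>+z. ennreal (cgauss_density N z) * indicator A (t + z) \<partial>lborel) = (\<integral>\<^sup>+y. ennreal (cgauss_density N (y - t)) * indicator A y \<partial>lborel)" for t
      using nn_integral_translate[of "\<lambda>y. ennreal (cgauss_density N (y - t)) * indicator A y" t] by simp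
    show ?thesis by (simp only: tr)
  qed
  also have "\<dots> = (\<integral>\<^sup>+y. (\<integral>\<^sup>+x. ennreal (cgauss_density N (y - s x)) * indicator A y \<partial>M) \<partial>lborel)"
  proof -
    interpret pair_sigma_finite M lborel ..
    show ?thesis
      by (rule Fubini'[where f="\<lambda>x y. ennreal (cgauss_density N (y - s x)) * indicator A y", symmetric])
        (simp add: measurable_cong_sets[OF sets_pair_measure_cong[OF sets_M refl] refl])
  qed
  also have "\<dots> = (\<integral>\<^sup>+y. qY y * indicator A y \<partial>lborel)"
    unfolding qY_def by (intro nn_integral_cong nn_integral_multc) simp
  also have "\<dots> = emeasure (density lborel qY) A"
    by (subst emeasure_density) (simp_all add: nn_integral_indicator)
  finally show "emeasure PY A = emeasure (density lborel qY) A" .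
qed


lemma prob_PY: "prob_space PY"
  unfolding PY_def by (intro prob_space.prob_space_distr prob_Pr) (simp add: measurable_cong_sets[OF sets_Pr refl])

lemma sets_PY[simp, measurable_cong]: "sets PY = sets borel"
  by (simp add: PY_def)

lemma r_meas[measurable]: "r \<in> borel_measurable (borel \<Otimes>\<^sub>M borel)"
  unfolding r_def by measurable

lemma r_nonneg: "r \<omega> \<ge> 0"
  using qYr_pos N by (auto simp: r_def case_prod_beta intro!: divide_nonneg_pos less_imp_le[OF cgauss_density_pos])

lemma sets_MPY[measurable_cong]: "sets (M \<Otimes>\<^sub>M PY) = sets (borel \<Otimes>\<^sub>M borel)"
  by (rule sets_pair_measure_cong[OF sets_M sets_PY])

lemma sets_J[measurable_cong]: "sets J = sets (borel \<Otimes>\<^sub>M borel)"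
  by (simp add: J_def)

lemma J_eq: "J = density (M \<Otimes>\<^sub>M PY) (\<lambda>\<omega>. ennreal (r \<omega>))"
proof (rule measure_eqI)
  show "sets J = sets (density (M \<Otimes>\<^sub>M PY) (\<lambda>\<omega>. ennreal (r \<omega>)))"
    by (simp only: sets_density sets_J sets_MPY)
  fix A assume "A \<in> sets J"
  then have A[measurable]: "A \<in> sets (borel \<Otimes>\<^sub>M borel)" by (simp add: sets_J)
  have tr: "(\<integral>\<^sup>+z. ennreal (cgauss_density N z) * indicator A (x, t + z) \<partial>lborel) = (\<integral>\<^sup>+y. ennreal (cgauss_density N (y - t)) * indicator A (x, y) \<partial>lborel)" for t x
    using nn_integral_translate[of "\<lambda>y. ennreal (cgauss_density N (y - t)) * indicator A (x, y)" t] by simp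
  have "emeasure J A = emeasure Pr ((\<lambda>\<omega>. (fst \<omega>, Y \<omega>)) -` A \<inter> space Pr)"
    unfolding J_def by (rule emeasure_distr) (simp_all add: measurable_cong_sets[OF sets_Pr refl])
  also have "\<dots> = (\<integral>\<^sup>+\<omega>. indicator ((\<lambda>\<omega>. (fst \<omega>, Y \<omega>)) -` A \<inter> space Pr) \<omega> \<partial>Pr)"
    by (rule nn_integral_indicator[symmetric]) (simp add: measurable_cong_sets[OF sets_Pr refl])
  also have "\<dots> = (\<integral>\<^sup>+\<omega>. indicator A (fst \<omega>, Y \<omega>) \<partial>Pr)"
    by (intro nn_integral_cong) (auto split: split_indicator)
  also have "\<dots> = (\<integral>\<^sup>+x. (\<integral>\<^sup>+z. ennreal (cgauss_density N z) * indicator A (x, s x + z) \<partial>lborel) \<partial>M)"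
    by (subst nn_Pr) (simp_all add: Y_def)
  also have "\<dots> = (\<integral>\<^sup>+x. (\<integral>\<^sup>+y. ennreal (cgauss_density N (y - s x)) * indicator A (x, y) \<partial>lborel) \<partial>M)"
    by (simp only: tr)
  also have "\<dots> = (\<integral>\<^sup>+x. (\<integral>\<^sup>+y. qY y * (ennreal (r (x, y)) * indicator A (x, y)) \<partial>lborel) \<partial>M)"
  proof (intro nn_integral_cong)
    fix x y
    have "qY y * ennreal (r (x, y)) = ennreal (cgauss_density N (y - s x))"
      using qYr_pos[of y] N by (simp add: qY_eq r_def ennreal_mult'[symmetric] less_imp_le[OF cgauss_density_pos])
    then show "ennreal (cgauss_density N (y - s x)) * indicator A (x, y) = qY y * (ennreal (r (x, y)) * indicator A (x, y))"
      by (simp add: mult.assoc[symmetric])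
  qed
  also have "\<dots> = (\<integral>\<^sup>+x. (\<integral>\<^sup>+y. ennreal (r (x, y)) * indicator A (x, y) \<partial>PY) \<partial>M)"
    unfolding PY_eq by (intro nn_integral_cong nn_integral_density[symmetric]) simp_all
  also have "\<dots> = (\<integral>\<^sup>+\<omega>. ennreal (r \<omega>) * indicator A \<omega> \<partial>(M \<Otimes>\<^sub>M PY))"
  proof -
    interpret PY: prob_space PY by (rule prob_PY)
    show ?thesis
      by (rule PY.nn_integral_fst[where f="\<lambda>\<omega>. ennreal (r \<omega>) * indicator A \<omega>", simplified])
        (simp add: measurable_cong_sets[OF sets_MPY refl])
  qed
  also have "\<dots> = emeasure (density (M \<Otimes>\<^sub>M PY) (\<lambda>\<omega>. ennreal (r \<omega>))) A"
    by (subst emeasure_density) (simp_all add: measurable_cong_sets[OF sets_MPY refl] sets_MPY)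
  finally show "emeasure J A = emeasure (density (M \<Otimes>\<^sub>M PY) (\<lambda>\<omega>. ennreal (r \<omega>))) A" .
qed


lemma distr_fst: "distr Pr borel fst = M"
proof -
  interpret cg: prob_space "cgauss N" by (rule cg_prob)
  have "distr Pr borel fst = distr Pr M fst"
  proof (rule measure_eqI)
    show "sets (distr Pr borel fst) = sets (distr Pr M fst)" by (simp add: sets_M)
    fix A assume "A \<in> sets (distr Pr borel fst)"
    then have A: "A \<in> sets borel" "A \<in> sets M" by (simp_all add: sets_M)
    have f1: "fst \<in> measurable Pr borel" by (simp add: measurable_cong_sets[OF sets_Pr refl])
    have f2: "fst \<in> measurable Pr M" by (simp add: measurable_cong_sets[OF sets_Pr sets_M])
    show "emeasure (distr Pr borel fst) A = emeasure (distr Pr M fst) A"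
      using A by (simp add: emeasure_distr[OF f1] emeasure_distr[OF f2])
  qed
  also have "\<dots> = M" unfolding Pr_def by (rule cg.distr_pair_fst)
  finally show ?thesis .
qed

definition "MI = prob_space.mutual_information Pr 2 borel borel fst Y"

lemma MI_KL: "MI = KL_divergence 2 (M \<Otimes>\<^sub>M PY) J"
  unfolding MI_def prob_space.mutual_information_def[OF prob_Pr] distr_fst
  by (simp add: PY_def J_def)

lemma prob_MPY: "prob_space (M \<Otimes>\<^sub>M PY)"
  by (intro prob_space_pair prob_space_axioms prob_PY)

lemma r_measMPY[measurable]: "r \<in> borel_measurable (M \<Otimes>\<^sub>M PY)"
  by (simp add: measurable_cong_sets[OF sets_MPY refl])

lemma KL_formula: "KL_divergence 2 (M \<Otimes>\<^sub>M PY) J = (\<integral>\<omega>. log 2 (r \<omega>) \<partial>J)"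
proof -
  interpret MP: prob_space "M \<Otimes>\<^sub>M PY" by (rule prob_MPY)
  have "AE \<omega> in M \<Otimes>\<^sub>M PY. ennreal (r \<omega>) = RN_deriv (M \<Otimes>\<^sub>M PY) J \<omega>"
    by (rule MP.RN_deriv_unique) (simp_all add: J_eq)
  then have "AE \<omega> in J. ennreal (r \<omega>) = RN_deriv (M \<Otimes>\<^sub>M PY) J \<omega>"
    unfolding J_eq by (subst AE_density) (auto elim: AE_mp)
  then have "AE \<omega> in J. entropy_density 2 (M \<Otimes>\<^sub>M PY) J \<omega> = log 2 (r \<omega>)"
    by eventually_elim (unfold entropy_density_def comp_def, metis enn2real_ennreal r_nonneg)
  then show ?thesis
    unfolding KL_divergence_def
    by (intro integral_cong_AE) (simp_all add: measurable_cong_sets[OF sets_J sets_MPY[symmetric]]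
        measurable_cong_sets[OF sets_J refl])
qed

lemma MI_Pr: "MI = (\<integral>\<omega>. log 2 (cgauss_density N (snd \<omega>) / qYr (Y \<omega>)) \<partial>Pr)"
proof -
  have "MI = (\<integral>\<omega>. log 2 (r \<omega>) \<partial>J)" by (simp add: MI_KL KL_formula)
  also have "\<dots> = (\<integral>\<omega>. log 2 (r (fst \<omega>, Y \<omega>)) \<partial>Pr)"
    unfolding J_def by (rule integral_distr) (simp_all add: measurable_cong_sets[OF sets_Pr refl])
  also have "\<dots> = (\<integral>\<omega>. log 2 (cgauss_density N (snd \<omega>) / qYr (Y \<omega>)) \<partial>Pr)"
    by (intro Bochner_Integration.integral_cong refl) (auto simp: r_def Y_def)
  finally show ?thesis .
qed

lemma MI_nonneg: "MI \<ge> 0"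
proof -
  interpret MP: information_space "M \<Otimes>\<^sub>M PY" 2
    unfolding information_space_def information_space_axioms_def using prob_MPY by simp
  have prJ: "prob_space J" unfolding J_def
    by (intro prob_space.prob_space_distr prob_Pr) (simp add: measurable_cong_sets[OF sets_Pr refl])
  show ?thesis
  proof (cases "integrable (M \<Otimes>\<^sub>M PY) (\<lambda>\<omega>. r \<omega> * log 2 (r \<omega>))")
    case True
    have "0 \<le> KL_divergence 2 (M \<Otimes>\<^sub>M PY) (density (M \<Otimes>\<^sub>M PY) r)"
      by (rule MP.KL_nonneg) (use prJ True in \<open>simp_all add: J_eq[symmetric] r_nonneg\<close>)
    then show ?thesis by (simp add: MI_KL J_eq)
  next
    case False
    have "\<not> integrable J (\<lambda>\<omega>. log 2 (r \<omega>))"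
      unfolding J_eq using False by (subst integrable_density) (simp_all add: r_nonneg)
    then show ?thesis by (simp add: MI_KL KL_formula not_integrable_integral_eq)
  qed
qed


definition "S2 = (\<integral>\<^sup>+x. ennreal ((cmod (s x))\<^sup>2) \<partial>M)"

lemma nn_snd_sq: "(\<integral>\<^sup>+\<omega>. ennreal ((cmod (snd \<omega>))\<^sup>2) \<partial>Pr) = N"
proof -
  have "(\<integral>\<^sup>+\<omega>. ennreal ((cmod (snd \<omega>))\<^sup>2) \<partial>Pr) = (\<integral>\<^sup>+x. (\<integral>\<^sup>+z. ennreal (cgauss_density N z) * ennreal ((cmod z)\<^sup>2) \<partial>lborel) \<partial>M)"
    by (subst nn_Pr) simp_all
  also have "\<dots> = (\<integral>\<^sup>+x. ennreal N \<partial>M)"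
    using N by (intro nn_integral_cong) (simp add: ennreal_mult'[symmetric] nn_integral_cgauss_sq)
  also have "\<dots> = N" by (simp add: emeasure_space_1)
  finally show ?thesis .
qed

lemma nn_Y_sq: "(\<integral>\<^sup>+\<omega>. ennreal ((cmod (Y \<omega>))\<^sup>2) \<partial>Pr) = N + S2"
proof -
  have "(\<integral>\<^sup>+\<omega>. ennreal ((cmod (Y \<omega>))\<^sup>2) \<partial>Pr) = (\<integral>\<^sup>+x. (\<integral>\<^sup>+z. ennreal (cgauss_density N z) * ennreal ((cmod (s x + z))\<^sup>2) \<partial>lborel) \<partial>M)"
    by (subst nn_Pr) (simp_all add: Y_def)
  also have "\<dots> = (\<integral>\<^sup>+x. ennreal N + ennreal ((cmod (s x))\<^sup>2) \<partial>M)"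
    using N by (intro nn_integral_cong) (simp add: ennreal_mult'[symmetric] cgauss_shift_sq ennreal_plus)
  also have "\<dots> = N + S2" by (simp add: nn_integral_add S2_def emeasure_space_1)
  finally show ?thesis .
qed

lemma nn_Y_sq_PY: "(\<integral>\<^sup>+\<omega>. ennreal ((cmod (Y \<omega>))\<^sup>2) \<partial>Pr) = (\<integral>\<^sup>+y. qY y * ennreal ((cmod y)\<^sup>2) \<partial>lborel)"
proof -
  have "(\<integral>\<^sup>+\<omega>. ennreal ((cmod (Y \<omega>))\<^sup>2) \<partial>Pr) = (\<integral>\<^sup>+y. ennreal ((cmod y)\<^sup>2) \<partial>PY)"
    unfolding PY_def by (subst nn_integral_distr) (simp_all add: measurable_cong_sets[OF sets_Pr refl])
  also have "\<dots> = (\<integral>\<^sup>+y. qY y * ennreal ((cmod y)\<^sup>2) \<partial>lborel)"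
    unfolding PY_eq by (rule nn_integral_density) simp_all
  finally show ?thesis .
qed

context
  assumes S2fin: "S2 < \<top>"
begin

definition "sr = enn2real S2"
definition "V = N + sr"

lemma S2_eq: "S2 = ennreal sr"
  using S2fin by (simp add: sr_def)

lemma sr_nonneg: "sr \<ge> 0" by (simp add: sr_def)

lemma V_pos: "V > 0" using N sr_nonneg by (simp add: V_def)

lemma hb_snd: "has_bochner_integral Pr (\<lambda>\<omega>. (cmod (snd \<omega>))\<^sup>2) N"
  using N by (intro has_bochner_integral_nn_integral) (simp_all add: nn_snd_sq measurable_cong_sets[OF sets_Pr refl])

lemma hb_Y: "has_bochner_integral Pr (\<lambda>\<omega>. (cmod (Y \<omega>))\<^sup>2) (N + sr)"
  using N sr_nonneg by (intro has_bochner_integral_nn_integral)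
    (simp_all add: nn_Y_sq S2_eq ennreal_plus measurable_cong_sets[OF sets_Pr refl])

definition "Af \<omega> = (ln (V / N) - (cmod (snd \<omega>))\<^sup>2 / N + (cmod (Y \<omega>))\<^sup>2 / V) / ln 2"

lemma Af_eq: "log 2 (cgauss_density N (snd \<omega>) / cgauss_density V (Y \<omega>)) = Af \<omega>"
proof -
  have "cgauss_density N (snd \<omega>) / cgauss_density V (Y \<omega>) = (V / N) * (exp (- (cmod (snd \<omega>))\<^sup>2 / N) / exp (- (cmod (Y \<omega>))\<^sup>2 / V))"
    using N V_pos by (simp add: cgauss_density_def field_simps)
  also have "exp (- (cmod (snd \<omega>))\<^sup>2 / N) / exp (- (cmod (Y \<omega>))\<^sup>2 / V) = exp (- (cmod (snd \<omega>))\<^sup>2 / N + (cmod (Y \<omega>))\<^sup>2 / V)"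
    by (simp add: exp_diff[symmetric])
  finally have "cgauss_density N (snd \<omega>) / cgauss_density V (Y \<omega>) = (V / N) * exp (- (cmod (snd \<omega>))\<^sup>2 / N + (cmod (Y \<omega>))\<^sup>2 / V)" .
  note eq = this
  have h: "ln (cgauss_density N (snd \<omega>) / cgauss_density V (Y \<omega>)) = ln (V / N) - (cmod (snd \<omega>))\<^sup>2 / N + (cmod (Y \<omega>))\<^sup>2 / V"
  proof -
    have "ln (cgauss_density N (snd \<omega>) / cgauss_density V (Y \<omega>)) = ln (V / N) + ln (exp (- (cmod (snd \<omega>))\<^sup>2 / N + (cmod (Y \<omega>))\<^sup>2 / V))"
      unfolding eq using N V_pos by (subst ln_mult) simp_all
    then show ?thesis by (simp only: ln_exp)
  qed
  show ?thesis unfolding Af_def log_def h ..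
qed

lemma hb_Af: "has_bochner_integral Pr Af (log 2 (V / N))"
proof -
  have "has_bochner_integral Pr (\<lambda>\<omega>. (ln (V / N) - (cmod (snd \<omega>))\<^sup>2 / N + (cmod (Y \<omega>))\<^sup>2 / V) / ln 2)
     ((ln (V / N) - N / N + (N + sr) / V) / ln 2)"
    using hb_snd hb_Y prob_space.prob_space prob_Pr
    by (intro has_bochner_integral_divide_zero has_bochner_integral_add has_bochner_integral_diff
        has_bochner_integral_divide_zero) (auto simp: has_bochner_integral_iff prob_space.prob_space[OF prob_Pr] prob_space.finite_measure[OF prob_Pr]
          finite_measure.integrable_const)
  moreover have "(ln (V / N) - N / N + (N + sr) / V) / ln 2 = log 2 (V / N)"
    using N V_pos by (simp add: V_def log_def)
  ultimately show ?thesis by (simp add: Af_def[abs_def])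
qed


lemma V_ge: "V / N \<ge> 1" using N sr_nonneg by (simp add: V_def)

lemma MI_exact:
  assumes q: "\<And>y. qYr y = cgauss_density V y"
  shows "MI = log 2 (V / N)"
proof -
  have "MI = (\<integral>\<omega>. Af \<omega> \<partial>Pr)" unfolding MI_Pr q Af_eq ..
  also have "\<dots> = log 2 (V / N)" using hb_Af by (simp add: has_bochner_integral_iff)
  finally show ?thesis .
qed

lemma prob_PY_qY: "(\<integral>\<^sup>+y. ennreal (qYr y) \<partial>lborel) = 1"
proof -
  have "emeasure PY (space PY) = 1" using prob_PY by (simp add: prob_space.emeasure_space_1)
  then show ?thesis unfolding PY_eq by (simp add: emeasure_density qY_eq[abs_def])
qed

lemma MI_le: "MI \<le> log 2 (V / N)"
proof (cases "integrable Pr (\<lambda>\<omega>. log 2 (cgauss_density N (snd \<omega>) / qYr (Y \<omega>)))")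
  case False
  then have "MI = 0" by (simp add: MI_Pr not_integrable_integral_eq)
  then show ?thesis using V_ge by simp
next
  case True
  define Bf where "Bf y = log 2 (qYr y / cgauss_density V y)" for y
  have [measurable]: "Bf \<in> borel_measurable borel" unfolding Bf_def[abs_def] by measurable
  have pw: "Af \<omega> - log 2 (cgauss_density N (snd \<omega>) / qYr (Y \<omega>)) = Bf (Y \<omega>)" for \<omega>
  proof -
    have p: "cgauss_density N (snd \<omega>) > 0" "cgauss_density V (Y \<omega>) > 0" "qYr (Y \<omega>) > 0"
      using N V_pos qYr_pos by (simp_all add: cgauss_density_pos)
    show ?thesis unfolding Af_eq[symmetric] Bf_def using p by (simp add: log_divide)
  qed
  have iAf: "integrable Pr Af" using hb_Af by (simp add: has_bochner_integral_iff)
  have iB: "integrable Pr (\<lambda>\<omega>. Bf (Y \<omega>))"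
    using Bochner_Integration.integrable_diff[OF iAf True] by (simp add: pw)
  have MIeq: "MI = log 2 (V / N) - (\<integral>\<omega>. Bf (Y \<omega>) \<partial>Pr)"
  proof -
    have "(\<integral>\<omega>. Bf (Y \<omega>) \<partial>Pr) = (\<integral>\<omega>. Af \<omega> \<partial>Pr) - (\<integral>\<omega>. log 2 (cgauss_density N (snd \<omega>) / qYr (Y \<omega>)) \<partial>Pr)"
      using Bochner_Integration.integral_diff[OF iAf True] by (simp add: pw)
    then show ?thesis using hb_Af by (simp add: MI_Pr has_bochner_integral_iff)
  qed
  have PYd: "PY = density lborel (\<lambda>y. ennreal (qYr y))" unfolding PY_eq qY_eq[abs_def] ..
  have Ym: "Y \<in> measurable Pr borel" by (simp add: measurable_cong_sets[OF sets_Pr refl])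
  have iBPY: "integrable PY Bf" unfolding PY_def using iB by (subst integrable_distr_eq[OF Ym]) simp_all
  have intB: "(\<integral>\<omega>. Bf (Y \<omega>) \<partial>Pr) = (\<integral>y. Bf y \<partial>PY)"
    unfolding PY_def by (rule integral_distr[symmetric, OF Ym]) simp
  have iq: "integrable lborel (\<lambda>y. qYr y * Bf y)"
    using iBPY unfolding PYd by (subst (asm) integrable_density) (simp_all add: less_imp_le[OF qYr_pos])
  have intq: "(\<integral>y. Bf y \<partial>PY) = (\<integral>y. qYr y * Bf y \<partial>lborel)"
    unfolding PYd by (subst integral_density) (simp_all add: less_imp_le[OF qYr_pos])
  have "(\<integral>y. qYr y * log 2 (qYr y / cgauss_density V y) \<partial>lborel) \<ge> 0"
  proof (rule gibbs)
    show "qYr y > 0" for y by (rule qYr_pos)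
    show "cgauss_density V y > 0" for y using V_pos by (rule cgauss_density_pos)
    show "integrable lborel qYr" "(\<integral>y. qYr y \<partial>lborel) = 1"
      using has_bochner_integral_nn_integral[of qYr lborel 1] prob_PY_qY qYr_pos
      by (auto simp: has_bochner_integral_iff less_imp_le)
    show "integrable lborel (cgauss_density V)" "(\<integral>y. cgauss_density V y \<partial>lborel) = 1"
      using has_bochner_integral_nn_integral[of "cgauss_density V" lborel 1] nn_integral_cgauss[OF V_pos] V_pos
      by (auto simp: has_bochner_integral_iff)
    show "integrable lborel (\<lambda>y. qYr y * log 2 (qYr y / cgauss_density V y))"
      using iq by (simp add: Bf_def)
  qed
  moreover have "(\<integral>\<omega>. Bf (Y \<omega>) \<partial>Pr) = (\<integral>y. qYr y * log 2 (qYr y / cgauss_density V y) \<partial>lborel)"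
    unfolding intB intq by (simp only: Bf_def)
  ultimately have "(\<integral>\<omega>. Bf (Y \<omega>) \<partial>Pr) \<ge> 0" by simp
  then show ?thesis by (simp add: MIeq)
qed

end

end


definition sth :: "('m::finite \<Rightarrow> real) \<Rightarrow> ('m \<Rightarrow> real) \<Rightarrow> complex ^ 'm \<Rightarrow> complex" where
  "sth g \<theta> x = (\<Sum>i\<in>UNIV. complex_of_real (g i) * cis (\<theta> i) * x $ i)"

lemma sth_meas[measurable]: "sth g \<theta> \<in> borel_measurable borel"
  unfolding sth_def[abs_def] by measurable

lemma chanI:
  assumes "M \<in> admissible Pw" "N > 0"
  shows "chan M N (sth g \<theta>)"
  using assms unfolding chan_def chan_axioms_def admissible_def by simp

lemma Btheta_MI:
  assumes "M \<in> admissible Pw" "N > 0"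
  shows "Btheta N g \<theta> M = chan.MI M N (sth g \<theta>)"
proof -
  interpret chan M N "sth g \<theta>" using assms by (rule chanI)
  show ?thesis unfolding Btheta_def MI_def Pr_def Y_def sth_def ..
qed

lemma Btheta_nonneg:
  assumes "M \<in> admissible Pw" "N > 0"
  shows "Btheta N g \<theta> M \<ge> 0"
proof -
  interpret chan M N "sth g \<theta>" using assms by (rule chanI)
  show ?thesis using assms by (simp add: Btheta_MI MI_nonneg)
qed


lemma Btheta_pstar:
  fixes Pw g :: "'m::finite \<Rightarrow> real"
  assumes P: "\<And>i. Pw i > 0" and gnn: "\<And>i. g i \<ge> 0" and N: "N > 0"
  shows "Btheta N g \<theta> (pstar Pw) = log 2 (1 + (\<Sum>i\<in>UNIV. (g i)\<^sup>2 * Pw i) / N)"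
proof -
  have adm: "pstar Pw \<in> admissible Pw" using P by (rule pstar_admissible)
  interpret chan "pstar Pw" N "sth g \<theta>" using adm N by (rule chanI)
  define T where "T = (\<Sum>i\<in>UNIV. (g i)\<^sup>2 * Pw i)"
  have T: "T \<ge> 0" unfolding T_def using P by (intro sum_nonneg mult_nonneg_nonneg) (auto simp: less_imp_le)
  have NT: "N + T > 0" using N T by simp
  have cm: "(cmod (complex_of_real (g i) * cis (\<theta> i)))\<^sup>2 * Pw i = (g i)\<^sup>2 * Pw i" for i
    using gnn[of i] by (simp add: norm_mult)
  have qYe: "qY y = ennreal (cgauss_density (N + T) y)" for y
    unfolding qY_def sth_def using pstar_conv[OF P N, where y=y and c="\<lambda>i. complex_of_real (g i) * cis (\<theta> i)"]
    by (simp add: cm T_def)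
  have qYre: "qYr y = cgauss_density (N + T) y" for y
    using NT by (simp add: qYr_def qYe)
  have "ennreal N + S2 = ennreal (N + T)"
  proof -
    have "ennreal N + S2 = (\<integral>\<^sup>+y. qY y * ennreal ((cmod y)\<^sup>2) \<partial>lborel)"
      using nn_Y_sq nn_Y_sq_PY by simp
    also have "\<dots> = ennreal (N + T)"
      using NT by (simp add: qYe ennreal_mult'[symmetric] nn_integral_cgauss_sq)
    finally show ?thesis .
  qed
  note h = this
  have fin: "S2 < \<top>"
  proof (rule ccontr)
    assume "\<not> S2 < \<top>"
    then have "S2 = \<top>" by (simp add: top_unique not_less)
    then show False using h by simp
  qed
  have S2e: "S2 = ennreal (enn2real S2)" using fin by simp
  have "ennreal (N + enn2real S2) = ennreal (N + T)"
    using h N by (subst ennreal_plus) (simp_all flip: S2e)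
  then have Sr: "enn2real S2 = T"
    using N T by (subst (asm) ennreal_inj) auto
  have V: "V = N + T" by (simp add: V_def[OF fin] sr_def[OF fin] Sr)
  have "Btheta N g \<theta> (pstar Pw) = MI" using adm N by (rule Btheta_MI)
  also have "\<dots> = log 2 (V / N)"
    by (rule MI_exact[OF fin]) (simp add: qYre V)
  also have "V / N = 1 + T / N" using N by (simp add: V field_simps)
  finally show ?thesis by (simp add: T_def)
qed


lemma cnj_meas[measurable]: "cnj \<in> borel_measurable borel"
  by (intro borel_measurable_continuous_onI continuous_on_cnj continuous_on_id)

lemma cmod_add_sq: "(cmod (a + b))\<^sup>2 = (cmod a)\<^sup>2 + (cmod b)\<^sup>2 + 2 * Re (a * cnj b)"
  unfolding cmod_power2 by (simp add: power2_eq_square algebra_simps)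

lemma cmod_add_eps_sq:
  fixes e :: real assumes "e = 1 \<or> e = -1"
  shows "(cmod (a + complex_of_real e * b))\<^sup>2 = (cmod a)\<^sup>2 + (cmod b)\<^sup>2 + 2 * e * Re (a * cnj b)"
  using assms by (auto simp: cmod_add_sq)

definition sI :: "('m \<Rightarrow> real) \<Rightarrow> ('m \<Rightarrow> real) \<Rightarrow> 'm set \<Rightarrow> complex ^ 'm::finite \<Rightarrow> complex" where
  "sI g \<theta> I x = (\<Sum>i\<in>I. complex_of_real (g i) * cis (\<theta> i) * x $ i)"

lemma sI_meas[measurable]: "sI g \<theta> I \<in> borel_measurable borel"
  unfolding sI_def[abs_def] by measurable

lemma choose_theta:
  fixes M :: "(complex ^ 'm::finite) measure" and g :: "'m \<Rightarrow> real"
  assumes sM: "sets M = sets borel" and L2: "\<And>i. integrable M (\<lambda>x. (cmod (x $ i))\<^sup>2)"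
    and I: "finite I"
  shows "\<exists>\<theta>. (\<forall>i. \<theta> i = 0 \<or> \<theta> i = pi) \<and> integrable M (\<lambda>x. (cmod (sI g \<theta> I x))\<^sup>2) \<and>
      (\<integral>x. (cmod (sI g \<theta> I x))\<^sup>2 \<partial>M) \<le> (\<Sum>i\<in>I. (g i)\<^sup>2 * (\<integral>x. (cmod (x $ i))\<^sup>2 \<partial>M))"
  using I
proof (induction I rule: finite_induct)
  case empty
  show ?case by (rule exI[of _ "\<lambda>_. 0"]) (simp add: sI_def)
next
  case (insert k I)
  have mc[measurable_cong]: "sets M = sets borel" by (rule sM)
  obtain \<theta> where th: "\<forall>i. \<theta> i = 0 \<or> \<theta> i = pi" and iA: "integrable M (\<lambda>x. (cmod (sI g \<theta> I x))\<^sup>2)"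
    and leA: "(\<integral>x. (cmod (sI g \<theta> I x))\<^sup>2 \<partial>M) \<le> (\<Sum>i\<in>I. (g i)\<^sup>2 * (\<integral>x. (cmod (x $ i))\<^sup>2 \<partial>M))"
    using insert.IH by blast
  define A where "A = sI g \<theta> I"
  define B where "B x = complex_of_real (g k) * x $ k" for x :: "complex ^ 'm"
  have [measurable]: "A \<in> borel_measurable borel" "B \<in> borel_measurable borel"
    unfolding A_def B_def[abs_def] by measurable
  then have [measurable]: "A \<in> borel_measurable M" "B \<in> borel_measurable M"
    by (simp_all add: measurable_cong_sets[OF sM refl])
  have iB: "integrable M (\<lambda>x. (cmod (B x))\<^sup>2)"
    using integrable_mult_left[OF L2[of k], of "(g k)\<^sup>2"] by (simp add: B_def norm_mult power_mult_distrib)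
  have intB: "(\<integral>x. (cmod (B x))\<^sup>2 \<partial>M) = (g k)\<^sup>2 * (\<integral>x. (cmod (x $ k))\<^sup>2 \<partial>M)"
    by (simp add: B_def norm_mult power_mult_distrib)
  have iAs: "integrable M (\<lambda>x. (cmod (A x))\<^sup>2)" using iA by (simp add: A_def)
  have iR: "integrable M (\<lambda>x. Re (A x * cnj (B x)))"
  proof (rule Bochner_Integration.integrable_bound)
    show "integrable M (\<lambda>x. (cmod (A x))\<^sup>2 + (cmod (B x))\<^sup>2)" using iAs iB by simp
    show "(\<lambda>x. Re (A x * cnj (B x))) \<in> borel_measurable M" by measurable
    show "AE x in M. norm (Re (A x * cnj (B x))) \<le> norm ((cmod (A x))\<^sup>2 + (cmod (B x))\<^sup>2)"
    proof (intro AE_I2)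
      fix x
      have "norm (Re (A x * cnj (B x))) \<le> cmod (A x * cnj (B x))" using abs_Re_le_cmod[of "A x * cnj (B x)"] by simp
      also have "\<dots> = cmod (A x) * cmod (B x)" by (simp add: norm_mult)
      also have "\<dots> \<le> (cmod (A x))\<^sup>2 + (cmod (B x))\<^sup>2"
        by (smt (verit) norm_ge_zero power2_eq_square mult_mono mult_nonneg_nonneg sum_squares_ge_zero
            zero_le_power2 power2_diff)
      also have "\<dots> = norm ((cmod (A x))\<^sup>2 + (cmod (B x))\<^sup>2)" by simp
      finally show "norm (Re (A x * cnj (B x))) \<le> norm ((cmod (A x))\<^sup>2 + (cmod (B x))\<^sup>2)" .
    qed
  qed
  define R where "R = (\<integral>x. Re (A x * cnj (B x)) \<partial>M)"
  define e :: real where "e = (if R \<le> 0 then 1 else -1)"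
  define t :: real where "t = (if R \<le> 0 then 0 else pi)"
  have e: "e = 1 \<or> e = -1" by (simp add: e_def)
  have ct: "cis t = complex_of_real e" by (simp add: t_def e_def)
  have eR: "e * R \<le> 0" by (simp add: e_def)
  define \<theta>' where "\<theta>' = \<theta>(k := t)"
  have th': "\<forall>i. \<theta>' i = 0 \<or> \<theta>' i = pi" using th by (simp add: \<theta>'_def t_def)
  have sI': "sI g \<theta>' (insert k I) x = A x + complex_of_real e * B x" for x
  proof -
    have "sI g \<theta>' I x = A x"
      unfolding A_def sI_def \<theta>'_def using insert.hyps by (intro sum.cong) auto
    then show ?thesis
      using insert.hyps by (simp add: sI_def \<theta>'_def ct B_def algebra_simps)
  qed
  have pw: "(cmod (sI g \<theta>' (insert k I) x))\<^sup>2 = (cmod (A x))\<^sup>2 + (cmod (B x))\<^sup>2 + 2 * e * Re (A x * cnj (B x))" for x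
    unfolding sI' by (rule cmod_add_eps_sq[OF e])
  have i': "integrable M (\<lambda>x. (cmod (sI g \<theta>' (insert k I) x))\<^sup>2)"
    unfolding pw using iAs iB iR by simp
  have "(\<integral>x. (cmod (sI g \<theta>' (insert k I) x))\<^sup>2 \<partial>M)
      = (\<integral>x. (cmod (A x))\<^sup>2 \<partial>M) + (\<integral>x. (cmod (B x))\<^sup>2 \<partial>M) + 2 * e * R"
    unfolding pw R_def using iAs iB iR by simp
  also have "\<dots> \<le> (\<Sum>i\<in>I. (g i)\<^sup>2 * (\<integral>x. (cmod (x $ i))\<^sup>2 \<partial>M)) + (g k)\<^sup>2 * (\<integral>x. (cmod (x $ k))\<^sup>2 \<partial>M)"
    using leA eR by (simp add: A_def intB)
  also have "\<dots> = (\<Sum>i\<in>insert k I. (g i)\<^sup>2 * (\<integral>x. (cmod (x $ i))\<^sup>2 \<partial>M))"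
    using insert.hyps by simp
  finally show ?case using th' i' by blast
qed


lemma adm_L2:
  fixes Pw :: "'m::finite \<Rightarrow> real"
  assumes M: "M \<in> admissible Pw" and P: "\<And>i. Pw i > 0"
  shows "integrable M (\<lambda>x. (cmod (x $ i))\<^sup>2)" "(\<integral>x. (cmod (x $ i))\<^sup>2 \<partial>M) \<le> Pw i"
proof -
  have sM: "sets M = sets borel" and b: "(\<integral>\<^sup>+ x. ennreal ((cmod (x $ i))\<^sup>2) \<partial>M) \<le> ennreal (Pw i)"
    using M by (auto simp: admissible_def)
  have [measurable]: "(\<lambda>x. (cmod (x $ i))\<^sup>2) \<in> borel_measurable M"
    by (simp add: measurable_cong_sets[OF sM refl])
  show i: "integrable M (\<lambda>x. (cmod (x $ i))\<^sup>2)"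
    by (rule integrableI_bounded) (use b in \<open>simp_all add: le_less_trans\<close>)
  have "ennreal (\<integral>x. (cmod (x $ i))\<^sup>2 \<partial>M) = (\<integral>\<^sup>+ x. ennreal ((cmod (x $ i))\<^sup>2) \<partial>M)"
    by (rule nn_integral_eq_integral[symmetric, OF i]) simp
  with b have "ennreal (\<integral>x. (cmod (x $ i))\<^sup>2 \<partial>M) \<le> ennreal (Pw i)" by simp
  then show "(\<integral>x. (cmod (x $ i))\<^sup>2 \<partial>M) \<le> Pw i"
    using P[of i] by (simp add: ennreal_le_iff)
qed

lemma upper:
  fixes Pw g :: "'m::finite \<Rightarrow> real"
  assumes M: "M \<in> admissible Pw" and P: "\<And>i. Pw i > 0" and N: "N > 0"
  shows "\<exists>\<theta>\<in>angles. Btheta N g \<theta> M \<le> log 2 (1 + (\<Sum>i\<in>UNIV. (g i)\<^sup>2 * Pw i) / N)"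
proof -
  have sM: "sets M = sets borel" using M by (simp add: admissible_def)
  obtain \<theta> where th: "\<forall>i. \<theta> i = 0 \<or> \<theta> i = pi" and iS: "integrable M (\<lambda>x. (cmod (sI g \<theta> UNIV x))\<^sup>2)"
    and leS: "(\<integral>x. (cmod (sI g \<theta> UNIV x))\<^sup>2 \<partial>M) \<le> (\<Sum>i\<in>UNIV. (g i)\<^sup>2 * (\<integral>x. (cmod (x $ i))\<^sup>2 \<partial>M))"
    using choose_theta[OF sM adm_L2(1)[OF M P] finite[of UNIV], of g] by blast
  have ang: "\<theta> \<in> angles"
  proof -
    have "0 \<le> \<theta> i \<and> \<theta> i < 2 * pi" for i
    proof -
      have "\<theta> i = 0 \<or> \<theta> i = pi" using th by blast
      then show ?thesis using pi_gt_zero by auto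
    qed
    then show ?thesis by (simp add: angles_def)
  qed
  interpret chan M N "sth g \<theta>" using M N by (rule chanI)
  have sS: "sth g \<theta> = sI g \<theta> UNIV" by (simp add: fun_eq_iff sth_def sI_def)
  define T where "T = (\<Sum>i\<in>UNIV. (g i)\<^sup>2 * Pw i)"
  have S2e: "S2 = ennreal (\<integral>x. (cmod (sI g \<theta> UNIV x))\<^sup>2 \<partial>M)"
  proof -
    have "S2 = (\<integral>\<^sup>+x. ennreal ((cmod (sth g \<theta> x))\<^sup>2) \<partial>M)" by (rule S2_def)
    also have "\<dots> = ennreal (\<integral>x. (cmod (sI g \<theta> UNIV x))\<^sup>2 \<partial>M)"
      unfolding sS by (rule nn_integral_eq_integral[OF iS]) simp
    finally show ?thesis .
  qed
  have fin: "S2 < \<top>" by (simp add: S2e)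
  have srle: "sr \<le> T"
  proof -
    have "sr = (\<integral>x. (cmod (sI g \<theta> UNIV x))\<^sup>2 \<partial>M)" by (simp add: sr_def[OF fin] S2e)
    also have "\<dots> \<le> (\<Sum>i\<in>UNIV. (g i)\<^sup>2 * (\<integral>x. (cmod (x $ i))\<^sup>2 \<partial>M))" by (rule leS)
    also have "\<dots> \<le> T" unfolding T_def
      by (intro sum_mono mult_left_mono adm_L2(2)[OF M P]) simp
    finally show ?thesis .
  qed
  have "Btheta N g \<theta> M = MI" using M N by (rule Btheta_MI)
  also have "\<dots> \<le> log 2 (V / N)" by (rule MI_le[OF fin])
  also have "\<dots> \<le> log 2 (1 + T / N)"
  proof -
    have "V / N \<le> 1 + T / N" using N srle by (simp add: V_def[OF fin] field_simps)
    moreover have "V / N > 0" using N V_pos[OF fin] by simp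
    ultimately show ?thesis by simp
  qed
  finally show ?thesis using ang by (auto simp: T_def)
qed

theorem lemma1:
  fixes N :: real and Pw g :: "'m::finite \<Rightarrow> real"
  assumes "N > 0" and "\<And>i. Pw i > 0" and "\<And>i. g i \<ge> 0"
  shows "(SUP M\<in>admissible Pw. INF \<theta>\<in>angles. Btheta N g \<theta> M)
           = log 2 (1 + (\<Sum>i\<in>UNIV. (g i)\<^sup>2 * Pw i) / N)
       \<and> pstar Pw \<in> admissible Pw
       \<and> (\<forall>\<theta>\<in>angles. Btheta N g \<theta> (pstar Pw) = log 2 (1 + (\<Sum>i\<in>UNIV. (g i)\<^sup>2 * Pw i) / N))"
proof -
  note N = assms(1) and P = assms(2) and gnn = assms(3)
  define L where "L = log 2 (1 + (\<Sum>i\<in>UNIV. (g i)\<^sup>2 * Pw i) / N)"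
  have adm: "pstar Pw \<in> admissible Pw" using P by (rule pstar_admissible)
  have ex: "Btheta N g \<theta> (pstar Pw) = L" for \<theta>
    unfolding L_def by (rule Btheta_pstar[OF P gnn N])
  have angne: "(angles :: ('m \<Rightarrow> real) set) \<noteq> {}" by (auto simp: angles_def intro!: exI[of _ "\<lambda>_. 0"])
  have infle: "(INF \<theta>\<in>angles. Btheta N g \<theta> M) \<le> L" if M: "M \<in> admissible Pw" for M
  proof -
    obtain \<theta> where th: "\<theta> \<in> angles" and le: "Btheta N g \<theta> M \<le> L"
      using upper[OF M P N, of g] unfolding L_def by blast
    have "bdd_below ((\<lambda>\<theta>. Btheta N g \<theta> M) ` angles)"
      using Btheta_nonneg[OF M N] by (intro bdd_belowI[of _ 0]) auto
    then have "(INF \<theta>\<in>angles. Btheta N g \<theta> M) \<le> Btheta N g \<theta> M"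
      using th by (rule cINF_lower)
    then show ?thesis using le by simp
  qed
  have infstar: "(INF \<theta>\<in>angles. Btheta N g \<theta> (pstar Pw)) = L"
    using angne by (simp add: ex cINF_const)
  have bdd: "bdd_above ((\<lambda>M. INF \<theta>\<in>angles. Btheta N g \<theta> M) ` admissible Pw)"
    using infle by (intro bdd_aboveI[of _ L]) auto
  have "(SUP M\<in>admissible Pw. INF \<theta>\<in>angles. Btheta N g \<theta> M) = L"
  proof (rule antisym)
    show "(SUP M\<in>admissible Pw. INF \<theta>\<in>angles. Btheta N g \<theta> M) \<le> L"
      using adm infle by (intro cSUP_least) auto
    have "(INF \<theta>\<in>angles. Btheta N g \<theta> (pstar Pw)) \<le> (SUP M\<in>admissible Pw. INF \<theta>\<in>angles. Btheta N g \<theta> M)"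
      using bdd adm by (rule cSUP_upper2) simp
    then show "L \<le> (SUP M\<in>admissible Pw. INF \<theta>\<in>angles. Btheta N g \<theta> M)" by (simp add: infstar)
  qed
  then show ?thesis using adm ex by (simp add: L_def)
qed


end
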